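(* Let $S_r$ be the unilateral right shift on $\ell^2(\mathbb{N})$. Then the family $\{S_r^n\}_{n\in\mathbb{N}}$ is UEC on the closed unit ball of $\ell^2(\mathbb{N})$, whereas the family of adjoints $\{(S_r^* )^n\}_{n\in\mathbb{N}}$ is not UEC on that ball. Consequently, the family of maps $A\mapsto AS_r^n$ ($n\in\mathbb{N}$) on the closed unit ball of $B(\ell^2(\mathbb{N}))$ is not UEC, even though $\{S_r^n\}_{n\in\mathbb{N}}$ is UEC.
   Context: The closed unit ball $H_1$ of a separable Hilbert space $H$ carries the weak uniformity (induced by $\rho(x,y)=\sum_{i\ge1}2^{-i}|\langle x-y,h_i\rangle|$ for a dense sequence $(h_i)$ in $H_1$), and the closed unit ball $B_1$ of $B(H)$ carries the weak operator uniformity (induced by $d(A,B)=\sum_{i,j\ge1}2^{-i-j}|\langle (A-B)h_i,h_j\rangle|$). A family $\mathcal{F}$ of maps from a metric space $(X,d)$ to itself is uniformly equicontinuous (UEC) if for every $\epsilon>0$ there is $\delta>0$ such that $d(x,y)<\delta$ implies $d(f(x),f(y))<\epsilon$ for all $f\in\mathcal{F}$, $x,y\in X$. *)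

theory Defs
  imports Complex_Main
begin

definition l2 :: "(nat \<Rightarrow> complex) set" where
  "l2 = {x. summable (\<lambda>n. (cmod (x n))\<^sup>2)}"

definition l2inner :: "(nat \<Rightarrow> complex) \<Rightarrow> (nat \<Rightarrow> complex) \<Rightarrow> complex" where
  "l2inner x y = (\<Sum>n. x n * cnj (y n))"

definition l2norm :: "(nat \<Rightarrow> complex) \<Rightarrow> real" where
  "l2norm x = sqrt (\<Sum>n. (cmod (x n))\<^sup>2)"

definition ball1 :: "(nat \<Rightarrow> complex) set" where
  "ball1 = {x \<in> l2. l2norm x \<le> 1}"

definition dense_seq :: "(nat \<Rightarrow> nat \<Rightarrow> complex) \<Rightarrow> bool" where
  "dense_seq h \<longleftrightarrow> (\<forall>i. h i \<in> ball1) \<and>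
     (\<forall>x\<in>ball1. \<forall>e>0. \<exists>i. l2norm (\<lambda>n. x n - h i n) < e)"

text \<open>Metric inducing the weak uniformity on H_1 (index i starts at 0, weight 2^-(i+1)).\<close>
definition wdist :: "(nat \<Rightarrow> nat \<Rightarrow> complex) \<Rightarrow> (nat \<Rightarrow> complex) \<Rightarrow> (nat \<Rightarrow> complex) \<Rightarrow> real" where
  "wdist h x y = (\<Sum>i. (1/2) ^ Suc i * cmod (l2inner (\<lambda>n. x n - y n) (h i)))"

definition opball1 :: "((nat \<Rightarrow> complex) \<Rightarrow> (nat \<Rightarrow> complex)) set" where
  "opball1 = {A. (\<forall>x\<in>l2. A x \<in> l2) \<and> (\<forall>x. x \<notin> l2 \<longrightarrow> A x = (\<lambda>n. 0)) \<and>
     (\<forall>x\<in>l2. \<forall>y\<in>l2. A (\<lambda>n. x n + y n) = (\<lambda>n. A x n + A y n)) \<and>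
     (\<forall>x\<in>l2. \<forall>c. A (\<lambda>n. c * x n) = (\<lambda>n. c * A x n)) \<and>
     (\<forall>x\<in>l2. l2norm (A x) \<le> l2norm x)}"

text \<open>Metric inducing the weak operator uniformity on B_1.\<close>
definition wodist :: "(nat \<Rightarrow> nat \<Rightarrow> complex) \<Rightarrow> ((nat \<Rightarrow> complex) \<Rightarrow> (nat \<Rightarrow> complex))
    \<Rightarrow> ((nat \<Rightarrow> complex) \<Rightarrow> (nat \<Rightarrow> complex)) \<Rightarrow> real" where
  "wodist h A B = (\<Sum>i. \<Sum>j. (1/2) ^ (Suc i + Suc j) * cmod (l2inner (\<lambda>n. A (h i) n - B (h i) n) (h j)))"

definition uec :: "'a set \<Rightarrow> ('a \<Rightarrow> 'a \<Rightarrow> real) \<Rightarrow> (nat \<Rightarrow> 'a \<Rightarrow> 'a) \<Rightarrow> bool" where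
  "uec X d F \<longleftrightarrow> (\<forall>e>0. \<exists>\<delta>>0. \<forall>n. \<forall>x\<in>X. \<forall>y\<in>X. d x y < \<delta> \<longrightarrow> d (F n x) (F n y) < e)"

definition shift_r :: "(nat \<Rightarrow> complex) \<Rightarrow> (nat \<Rightarrow> complex)" where
  "shift_r x = (\<lambda>n. if n = 0 then 0 else x (n - 1))"

definition shift_l :: "(nat \<Rightarrow> complex) \<Rightarrow> (nat \<Rightarrow> complex)" where
  "shift_l x = (\<lambda>n. x (Suc n))"

end

theory Submission
  imports Defs "HOL-Analysis.Analysis"
begin

lemma l2_summ: "x \<in> l2 \<Longrightarrow> summable (\<lambda>n. (cmod (x n))\<^sup>2)" by (simp add: l2_def)

lemma amgm2: "(u::real) * v \<le> (u\<^sup>2 + v\<^sup>2) / 2"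
proof -
  have "0 \<le> (u - v)\<^sup>2" by simp
  then show ?thesis by (simp add: power2_diff)
qed

lemma cs_summable: "a \<in> l2 \<Longrightarrow> b \<in> l2 \<Longrightarrow> summable (\<lambda>n. cmod (a n) * cmod (b n))"
proof -
  assume a: "a \<in> l2" and b: "b \<in> l2"
  have "summable (\<lambda>n. ((cmod (a n))\<^sup>2 + (cmod (b n))\<^sup>2) / 2)"
    using l2_summ[OF a] l2_summ[OF b] by (intro summable_divide summable_add)
  then show ?thesis
    by (rule summable_comparison_test') (use amgm2 in auto)
qed

lemma l2norm_nonneg: "x \<in> l2 \<Longrightarrow> 0 \<le> l2norm x"
  unfolding l2norm_def by (intro real_sqrt_ge_zero suminf_nonneg) (auto simp: l2_summ)

lemma partial_le_l2norm: "a \<in> l2 \<Longrightarrow> sqrt (\<Sum>n<N. (cmod (a n))\<^sup>2) \<le> l2norm a"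
  unfolding l2norm_def
  by (intro real_sqrt_le_mono sum_le_suminf) (auto simp: l2_summ)

lemma cs_le: "a \<in> l2 \<Longrightarrow> b \<in> l2 \<Longrightarrow> (\<Sum>n. cmod (a n) * cmod (b n)) \<le> l2norm a * l2norm b"
proof (rule suminf_le_const)
  assume a: "a \<in> l2" and b: "b \<in> l2"
  show "summable (\<lambda>n. cmod (a n) * cmod (b n))" using cs_summable a b .
  fix N
  have "(\<Sum>n<N. cmod (a n) * cmod (b n)) = (\<Sum>n<N. \<bar>cmod (a n)\<bar> * \<bar>cmod (b n)\<bar>)" by simp
  also have "\<dots> \<le> L2_set (\<lambda>n. cmod (a n)) {..<N} * L2_set (\<lambda>n. cmod (b n)) {..<N}"
    by (rule L2_set_mult_ineq)
  also have "\<dots> \<le> l2norm a * l2norm b"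
    unfolding L2_set_def
    by (intro mult_mono partial_le_l2norm a b l2norm_nonneg real_sqrt_ge_zero sum_nonneg) auto
  finally show "(\<Sum>n<N. cmod (a n) * cmod (b n)) \<le> l2norm a * l2norm b" .
qed

lemma inner_summable: "a \<in> l2 \<Longrightarrow> b \<in> l2 \<Longrightarrow> summable (\<lambda>n. a n * cnj (b n))"
  by (rule summable_norm_cancel) (simp add: norm_mult cs_summable)

lemma inner_le: "a \<in> l2 \<Longrightarrow> b \<in> l2 \<Longrightarrow> cmod (l2inner a b) \<le> l2norm a * l2norm b"
proof -
  assume a: "a \<in> l2" and b: "b \<in> l2"
  have "cmod (l2inner a b) \<le> (\<Sum>n. norm (a n * cnj (b n)))"
    unfolding l2inner_def
    by (rule summable_norm) (simp add: norm_mult cs_summable a b)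
  also have "\<dots> = (\<Sum>n. cmod (a n) * cmod (b n))" by (simp add: norm_mult)
  also have "\<dots> \<le> l2norm a * l2norm b" using cs_le a b .
  finally show ?thesis .
qed

lemma inner_diff1: "a \<in> l2 \<Longrightarrow> b \<in> l2 \<Longrightarrow> c \<in> l2 \<Longrightarrow>
   l2inner (\<lambda>n. a n - b n) c = l2inner a c - l2inner b c"
proof -
  assume a: "a \<in> l2" and b: "b \<in> l2" and c: "c \<in> l2"
  have "(\<lambda>n. (a n - b n) * cnj (c n)) = (\<lambda>n. a n * cnj (c n) - b n * cnj (c n))"
    by (simp add: algebra_simps)
  then show ?thesis unfolding l2inner_def
    using suminf_diff[OF inner_summable[OF a c] inner_summable[OF b c]] by simp
qed

lemma inner_diff2: "a \<in> l2 \<Longrightarrow> b \<in> l2 \<Longrightarrow> c \<in> l2 \<Longrightarrow>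
   l2inner a (\<lambda>n. b n - c n) = l2inner a b - l2inner a c"
proof -
  assume a: "a \<in> l2" and b: "b \<in> l2" and c: "c \<in> l2"
  have "(\<lambda>n. a n * cnj (b n - c n)) = (\<lambda>n. a n * cnj (b n) - a n * cnj (c n))"
    by (simp add: algebra_simps)
  then show ?thesis unfolding l2inner_def
    using suminf_diff[OF inner_summable[OF a b] inner_summable[OF a c]] by simp
qed

lemma ball1_l2: "x \<in> ball1 \<Longrightarrow> x \<in> l2" by (simp add: ball1_def)
lemma ball1_norm: "x \<in> ball1 \<Longrightarrow> l2norm x \<le> 1" by (simp add: ball1_def)

lemma diff_bound: "x \<in> ball1 \<Longrightarrow> y \<in> ball1 \<Longrightarrow> g \<in> l2 \<Longrightarrow>
    cmod (l2inner (\<lambda>n. x n - y n) g) \<le> 2 * l2norm g"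
proof -
  assume x: "x \<in> ball1" and y: "y \<in> ball1" and g: "g \<in> l2"
  have "cmod (l2inner (\<lambda>n. x n - y n) g) = cmod (l2inner x g - l2inner y g)"
    using inner_diff1 ball1_l2 x y g by simp
  also have "\<dots> \<le> cmod (l2inner x g) + cmod (l2inner y g)" by (rule norm_triangle_ineq4)
  also have "\<dots> \<le> l2norm x * l2norm g + l2norm y * l2norm g"
    using inner_le ball1_l2 x y g by (intro add_mono) auto
  also have "\<dots> \<le> 1 * l2norm g + 1 * l2norm g"
    using ball1_norm x y l2norm_nonneg[OF g] by (intro add_mono mult_right_mono) auto
  finally show ?thesis by simp
qed

lemma shift_l_pow: "(shift_l ^^ n) h = (\<lambda>k. h (k + n))"
  by (induction n) (auto simp: shift_l_def)

lemma shift_r_pow: "(shift_r ^^ n) x = (\<lambda>k. if k < n then 0 else x (k - n))"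
  by (induction n) (auto simp: shift_r_def fun_eq_iff)

lemma adj: "l2inner (shift_r x) y = l2inner x (shift_l y)"
proof -
  have "\<And>s. (\<lambda>n. x n * cnj (shift_l y n)) sums s \<longleftrightarrow> (\<lambda>n. shift_r x n * cnj (y n)) sums s"
    using sums_Suc_iff[of "\<lambda>n. shift_r x n * cnj (y n)"] by (simp add: shift_r_def shift_l_def)
  then have "(sums) (\<lambda>n. shift_r x n * cnj (y n)) = (sums) (\<lambda>n. x n * cnj (shift_l y n))"
    by (intro ext) blast
  then show ?thesis unfolding l2inner_def suminf_def by simp
qed

lemma adj_pow: "l2inner ((shift_r ^^ n) x) y = l2inner x ((shift_l ^^ n) y)"
proof (induction n arbitrary: y)
  case 0 then show ?case by simp
next
  case (Suc n)
  have "l2inner ((shift_r ^^ Suc n) x) y = l2inner ((shift_r ^^ n) x) (shift_l y)"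
    by (simp add: adj)
  also have "\<dots> = l2inner x ((shift_l ^^ n) (shift_l y))" by (rule Suc.IH)
  also have "\<dots> = l2inner x ((shift_l ^^ Suc n) y)" by (simp only: funpow_Suc_right o_apply)
  finally show ?case .
qed

lemma shift_l_pow_l2: "h \<in> l2 \<Longrightarrow> (shift_l ^^ n) h \<in> l2"
  using summable_iff_shift[of "\<lambda>k. (cmod (h k))\<^sup>2" n] by (simp add: shift_l_pow l2_def)

lemma shift_l_pow_ball1: "h \<in> ball1 \<Longrightarrow> (shift_l ^^ n) h \<in> ball1"
proof -
  assume h: "h \<in> ball1"
  have s: "summable (\<lambda>k. (cmod (h k))\<^sup>2)" using h by (simp add: ball1_def l2_def)
  have "(\<Sum>k. (cmod (h (k + n)))\<^sup>2) \<le> (\<Sum>k. (cmod (h k))\<^sup>2)"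
    using suminf_split_initial_segment[OF s, of n] sum_nonneg[of "{..<n}" "\<lambda>k. (cmod (h k))\<^sup>2"]
    by simp
  then have "l2norm ((shift_l ^^ n) h) \<le> l2norm h"
    by (simp add: l2norm_def shift_l_pow)
  then show ?thesis using h shift_l_pow_l2[of h n] by (auto simp: ball1_def)
qed


lemma l2_diff: "x \<in> l2 \<Longrightarrow> y \<in> l2 \<Longrightarrow> (\<lambda>n. x n - y n) \<in> l2"
proof -
  assume x: "x \<in> l2" and y: "y \<in> l2"
  have "summable (\<lambda>n. 2 * (cmod (x n))\<^sup>2 + 2 * (cmod (y n))\<^sup>2)"
    using l2_summ[OF x] l2_summ[OF y] by (intro summable_add summable_mult)
  moreover have "(cmod (x n - y n))\<^sup>2 \<le> 2 * (cmod (x n))\<^sup>2 + 2 * (cmod (y n))\<^sup>2" for n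
  proof -
    have "cmod (x n - y n) \<le> cmod (x n) + cmod (y n)" by (rule norm_triangle_ineq4)
    then have "(cmod (x n - y n))\<^sup>2 \<le> (cmod (x n) + cmod (y n))\<^sup>2"
      by (intro power_mono) auto
    also have "\<dots> \<le> 2 * (cmod (x n))\<^sup>2 + 2 * (cmod (y n))\<^sup>2"
      using amgm2[of "cmod (x n)" "cmod (y n)"] by (simp add: power2_sum)
    finally show ?thesis .
  qed
  ultimately show ?thesis unfolding l2_def
    by (auto intro: summable_comparison_test')
qed

lemma geo_summable: "(\<And>i. 0 \<le> a i \<and> a i \<le> C) \<Longrightarrow> summable (\<lambda>i. (1/2::real) ^ Suc i * a i)"
proof -
  assume H: "\<And>i. 0 \<le> a i \<and> a i \<le> C"
  have "summable (\<lambda>i. C * (1/2::real) ^ i)"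
    by (intro summable_mult summable_geometric) simp
  moreover have "norm ((1/2::real) ^ Suc i * a i) \<le> C * (1/2::real) ^ i" for i
  proof -
    have "norm ((1/2::real) ^ Suc i * a i) = (1/2::real) ^ Suc i * a i" using H[of i] by simp
    also have "\<dots> \<le> (1/2::real) ^ i * a i" using H[of i] by (intro mult_right_mono) auto
    also have "\<dots> \<le> (1/2::real) ^ i * C" using H[of i] by (intro mult_left_mono) auto
    finally show ?thesis by (simp add: mult.commute)
  qed
  ultimately show ?thesis
    using summable_comparison_test'[of "\<lambda>i. C * (1/2::real) ^ i" 0 "\<lambda>i. (1/2::real) ^ Suc i * a i"]
    by blast
qed

lemma key_formula:
  "wdist h ((shift_r ^^ n) x) ((shift_r ^^ n) y) =
   (\<Sum>i. (1/2) ^ Suc i * cmod (l2inner (\<lambda>k. x k - y k) ((shift_l ^^ n) (h i))))"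
proof -
  have "(\<lambda>k. (shift_r ^^ n) x k - (shift_r ^^ n) y k) = (shift_r ^^ n) (\<lambda>k. x k - y k)"
    by (simp add: shift_r_pow fun_eq_iff)
  then show ?thesis unfolding wdist_def by (simp add: adj_pow)
qed

lemma part1:
  assumes hb: "\<And>i. h i \<in> ball1"
    and dens: "\<And>x e. x \<in> ball1 \<Longrightarrow> e > 0 \<Longrightarrow> \<exists>i. l2norm (\<lambda>n. x n - h i n) < e"
  shows "uec ball1 (wdist h) (\<lambda>n. shift_r ^^ n)"
  unfolding uec_def
proof (intro allI impI)
  fix e :: real assume e: "e > 0"
  obtain I where I: "(1/2::real) ^ I < e / 4"
    using real_arch_pow_inv[of "e/4" "1/2"] e by auto
  define \<eta> where "\<eta> = e / (2 * (real I + 1))"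
  have eta: "\<eta> > 0" using e by (simp add: \<eta>_def)
  have Iet: "real I * \<eta> < e / 2"
  proof -
    have "real I * \<eta> = e / 2 * (real I / (real I + 1))" by (simp add: \<eta>_def field_simps)
    also have "\<dots> < e / 2 * 1" using e by (intro mult_strict_left_mono) auto
    finally show ?thesis by simp
  qed
  have hl2: "\<And>i. h i \<in> l2" using hb ball1_l2 by blast
  have "\<forall>i. \<exists>N. \<forall>n\<ge>N. norm (\<Sum>k. (cmod (h i (k + n)))\<^sup>2) < (\<eta>/2)\<^sup>2"
  proof
    fix i
    show "\<exists>N. \<forall>n\<ge>N. norm (\<Sum>k. (cmod (h i (k + n)))\<^sup>2) < (\<eta>/2)\<^sup>2"
      using suminf_exist_split[OF _ l2_summ[OF hl2[of i]], of "(\<eta>/2)\<^sup>2"] eta by simp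
  qed
  then obtain Nf where Nf: "\<And>i n. n \<ge> Nf i \<Longrightarrow> norm (\<Sum>k. (cmod (h i (k + n)))\<^sup>2) < (\<eta>/2)\<^sup>2"
    by metis
  define N where "N = (\<Sum>i<I. Nf i)"
  have NfN: "i < I \<Longrightarrow> Nf i \<le> N" for i
    unfolding N_def by (rule member_le_sum) auto
  have "\<forall>n i. \<exists>j. l2norm (\<lambda>k. (shift_l ^^ n) (h i) k - h j k) < \<eta> / 4"
  proof (intro allI)
    fix n i
    show "\<exists>j. l2norm (\<lambda>k. (shift_l ^^ n) (h i) k - h j k) < \<eta> / 4"
      using dens[OF shift_l_pow_ball1[OF hb], of "\<eta>/4" n i] eta by simp
  qed
  then obtain jf where jf: "\<And>n i. l2norm (\<lambda>k. (shift_l ^^ n) (h i) k - h (jf n i) k) < \<eta> / 4"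
    by metis
  define J where "J = (\<Sum>n<N. \<Sum>i<I. jf n i)"
  have jfJ: "n < N \<Longrightarrow> i < I \<Longrightarrow> jf n i \<le> J" for n i
  proof -
    assume "n < N" "i < I"
    have "jf n i \<le> (\<Sum>i<I. jf n i)" using \<open>i < I\<close> by (intro member_le_sum) auto
    also have "\<dots> \<le> J" unfolding J_def using \<open>n < N\<close>
      by (intro member_le_sum[of n "{..<N}" "\<lambda>n. \<Sum>i<I. jf n i"]) auto
    finally show ?thesis .
  qed
  define \<delta> where "\<delta> = \<eta> / 2 * (1/2) ^ Suc J"
  have dpos: "\<delta> > 0" using eta by (simp add: \<delta>_def)
  show "\<exists>\<delta>>0. \<forall>n. \<forall>x\<in>ball1. \<forall>y\<in>ball1. wdist h x y < \<delta> \<longrightarrow>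
         wdist h ((shift_r ^^ n) x) ((shift_r ^^ n) y) < e"
  proof (intro exI[of _ \<delta>] conjI dpos allI ballI impI)
    fix n x y assume x: "x \<in> ball1" and y: "y \<in> ball1" and d: "wdist h x y < \<delta>"
    define z where "z = (\<lambda>k. x k - y k)"
    have zl2: "z \<in> l2" unfolding z_def using x y ball1_l2 l2_diff by blast
    define T where "T i = cmod (l2inner z ((shift_l ^^ n) (h i)))" for i
    have T02: "0 \<le> T i \<and> T i \<le> 2" for i
    proof -
      have g: "(shift_l ^^ n) (h i) \<in> ball1" using shift_l_pow_ball1 hb by blast
      have "T i \<le> 2 * l2norm ((shift_l ^^ n) (h i))"
        unfolding T_def z_def using diff_bound x y g ball1_l2 by blast
      also have "\<dots> \<le> 2" using ball1_norm g by simp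
      finally show ?thesis by (simp add: T_def)
    qed
    have hsmall: "cmod (l2inner z (h j)) < \<eta> / 2" if "j \<le> J" for j
    proof -
      have summ: "summable (\<lambda>i. (1/2::real) ^ Suc i * cmod (l2inner z (h i)))"
        unfolding z_def
      proof (rule geo_summable[where C=2])
        fix i
        have "cmod (l2inner (\<lambda>k. x k - y k) (h i)) \<le> 2 * l2norm (h i)"
          using diff_bound x y hl2 by blast
        also have "\<dots> \<le> 2" using ball1_norm[OF hb[of i]] by simp
        finally show "0 \<le> cmod (l2inner (\<lambda>k. x k - y k) (h i)) \<and> cmod (l2inner (\<lambda>k. x k - y k) (h i)) \<le> 2"
          by simp
      qed
      have "(1/2::real) ^ Suc j * cmod (l2inner z (h j)) \<le> wdist h x y"
        unfolding wdist_def z_def[symmetric]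
        using sum_le_suminf[OF summ, of "{j}"] by simp
      also have "\<dots> < \<delta>" by (rule d)
      also have "\<dots> \<le> \<eta> / 2 * (1/2) ^ Suc j"
        unfolding \<delta>_def using eta that by (intro mult_left_mono power_decreasing) auto
      finally show ?thesis by (simp add: mult.commute)
    qed
    have Tsmall: "T i < \<eta>" if "i < I" for i
    proof (cases "n < N")
      case True
      define g where "g = (shift_l ^^ n) (h i)"
      define j where "j = jf n i"
      have gl2: "g \<in> l2" unfolding g_def using shift_l_pow_l2 hl2 by blast
      have jJ: "j \<le> J" unfolding j_def using jfJ True that by blast
      have "l2inner z (\<lambda>k. g k - h j k) = l2inner z g - l2inner z (h j)"
        using inner_diff2 zl2 gl2 hl2 by blast
      then have "l2inner z g = l2inner z (h j) + l2inner z (\<lambda>k. g k - h j k)" by simp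
      then have "T i \<le> cmod (l2inner z (h j)) + cmod (l2inner z (\<lambda>k. g k - h j k))"
        unfolding T_def g_def[symmetric] by (simp add: norm_triangle_ineq)
      also have "cmod (l2inner z (\<lambda>k. g k - h j k)) \<le> 2 * l2norm (\<lambda>k. g k - h j k)"
        unfolding z_def using diff_bound x y l2_diff gl2 hl2 by blast
      also have "2 * l2norm (\<lambda>k. g k - h j k) < 2 * (\<eta> / 4)"
        using jf[of n i] unfolding g_def j_def by simp
      finally show ?thesis using hsmall[OF jJ] by simp
    next
      case False
      then have "n \<ge> Nf i" using NfN[OF that] by simp
      from Nf[OF this] have s: "(\<Sum>k. (cmod (h i (k + n)))\<^sup>2) < (\<eta>/2)\<^sup>2" by simp
      have "l2norm ((shift_l ^^ n) (h i)) = sqrt (\<Sum>k. (cmod (h i (k + n)))\<^sup>2)"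
        by (simp add: l2norm_def shift_l_pow)
      also have "\<dots> < sqrt ((\<eta>/2)\<^sup>2)" using s by (simp only: real_sqrt_less_iff)
      also have "\<dots> = \<eta> / 2" using eta by simp
      finally have "l2norm ((shift_l ^^ n) (h i)) < \<eta> / 2" .
      moreover have "T i \<le> 2 * l2norm ((shift_l ^^ n) (h i))"
        unfolding T_def z_def using diff_bound x y shift_l_pow_l2 hl2 by blast
      ultimately show ?thesis by simp
    qed
    define f where "f i = (1/2::real) ^ Suc i * T i" for i
    have fs: "summable f" unfolding f_def by (rule geo_summable) (rule T02)
    have "wdist h ((shift_r ^^ n) x) ((shift_r ^^ n) y) = suminf f"
      unfolding key_formula by (rule arg_cong[where f=suminf]) (simp add: fun_eq_iff f_def T_def z_def)
    also have "\<dots> = (\<Sum>k. f (k + I)) + (\<Sum>i<I. f i)"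
      by (rule suminf_split_initial_segment[OF fs])
    also have "(\<Sum>i<I. f i) \<le> (\<Sum>i<I. \<eta>)"
    proof (rule sum_mono)
      fix i assume "i \<in> {..<I}"
      then have "T i < \<eta>" using Tsmall by simp
      moreover have "(1/2::real) ^ Suc i \<le> 1" by (rule power_le_one) auto
      moreover have "(1/2::real) ^ Suc i * T i \<le> 1 * T i"
        using T02[of i] \<open>(1/2::real) ^ Suc i \<le> 1\<close> by (intro mult_right_mono) auto
      ultimately show "f i \<le> \<eta>" unfolding f_def by simp
    qed
    also have "(\<Sum>k. f (k + I)) \<le> (\<Sum>k. (1/2::real) ^ I * (1/2) ^ k)"
    proof (rule suminf_le)
      fix k
      have "f (k + I) \<le> (1/2::real) ^ Suc (k + I) * 2"
        unfolding f_def using T02 by (intro mult_left_mono) auto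
      also have "\<dots> = (1/2::real) ^ I * (1/2) ^ k" by (simp add: power_add)
      finally show "f (k + I) \<le> (1/2::real) ^ I * (1/2) ^ k" .
    next
      show "summable (\<lambda>k. f (k + I))" using fs by simp
      show "summable (\<lambda>k. (1/2::real) ^ I * (1/2) ^ k)"
        by (intro summable_mult summable_geometric) simp
    qed
    also have "(\<Sum>k. (1/2::real) ^ I * (1/2) ^ k) = (1/2) ^ I * 2"
      by (subst suminf_mult) (simp_all add: suminf_geometric)
    finally show "wdist h ((shift_r ^^ n) x) ((shift_r ^^ n) y) < e"
      using I Iet by simp
  qed
qed


definition sgl :: "nat \<Rightarrow> complex \<Rightarrow> nat \<Rightarrow> complex" where
  "sgl p a = (\<lambda>k. if k = p then a else 0)"

definition Wf :: "(nat \<Rightarrow> nat \<Rightarrow> complex) \<Rightarrow> nat \<Rightarrow> real" where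
  "Wf h p = (\<Sum>i. (1/2) ^ Suc i * cmod (h i p))"

lemma sgl_sq: "(\<lambda>k. (cmod (sgl p a k))\<^sup>2) = (\<lambda>k. if k = p then (cmod a)\<^sup>2 else 0)"
  by (auto simp: sgl_def fun_eq_iff)

lemma sgl_l2: "sgl p a \<in> l2"
  unfolding l2_def using sums_single[of p "\<lambda>_. (cmod a)\<^sup>2"] sgl_sq[of p a]
  by (auto simp: sums_iff)

lemma sgl_norm: "l2norm (sgl p a) = cmod a"
  unfolding l2norm_def using sums_single[of p "\<lambda>_. (cmod a)\<^sup>2"] sgl_sq[of p a]
  by (simp add: sums_iff)

lemma sgl_ball1: "sgl p 1 \<in> ball1"
  by (simp add: ball1_def sgl_l2 sgl_norm)

lemma inner_sgl: "l2inner (sgl p a) g = a * cnj (g p)"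
proof -
  have "(\<lambda>k. sgl p a k * cnj (g k)) = (\<lambda>k. if k = p then a * cnj (g p) else 0)"
    by (auto simp: sgl_def fun_eq_iff)
  then show ?thesis unfolding l2inner_def
    using sums_single[of p "\<lambda>_. a * cnj (g p)"] by (simp add: sums_iff)
qed

lemma ball1_coord: "x \<in> ball1 \<Longrightarrow> cmod (x p) \<le> 1"
proof -
  assume x: "x \<in> ball1"
  have "(cmod (x p))\<^sup>2 \<le> (\<Sum>k<Suc p. (cmod (x k))\<^sup>2)"
    by (rule member_le_sum) auto
  then have "sqrt ((cmod (x p))\<^sup>2) \<le> sqrt (\<Sum>k<Suc p. (cmod (x k))\<^sup>2)"
    by (rule real_sqrt_le_mono)
  also have "\<dots> \<le> l2norm x" using partial_le_l2norm ball1_l2[OF x] .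
  also have "\<dots> \<le> 1" using ball1_norm[OF x] .
  finally show ?thesis by simp
qed

lemma l2_coord: "x \<in> l2 \<Longrightarrow> cmod (x p) \<le> l2norm x"
proof -
  assume x: "x \<in> l2"
  have "(cmod (x p))\<^sup>2 \<le> (\<Sum>k<Suc p. (cmod (x k))\<^sup>2)"
    by (rule member_le_sum) auto
  then have "sqrt ((cmod (x p))\<^sup>2) \<le> sqrt (\<Sum>k<Suc p. (cmod (x k))\<^sup>2)"
    by (rule real_sqrt_le_mono)
  also have "\<dots> \<le> l2norm x" using partial_le_l2norm x .
  finally show ?thesis by simp
qed

lemma W_summable: "(\<And>i. h i \<in> ball1) \<Longrightarrow> summable (\<lambda>i. (1/2::real) ^ Suc i * cmod (h i p))"
  by (rule geo_summable[where C=1]) (simp add: ball1_coord)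

lemma W_nonneg: "(\<And>i. h i \<in> ball1) \<Longrightarrow> 0 \<le> Wf h p"
  unfolding Wf_def by (intro suminf_nonneg W_summable) auto

lemma W_tendsto: assumes hb: "\<And>i. h i \<in> ball1" shows "(\<lambda>m. Wf h m) \<longlonglongrightarrow> 0"
proof -
  have lim: "(\<lambda>m. (1/2::real) ^ Suc k * cmod (h k m)) \<longlonglongrightarrow> 0" for k
  proof -
    have "(\<lambda>m. (cmod (h k m))\<^sup>2) \<longlonglongrightarrow> 0"
      using summable_LIMSEQ_zero l2_summ ball1_l2 hb by blast
    then have "(\<lambda>m. sqrt ((cmod (h k m))\<^sup>2)) \<longlonglongrightarrow> sqrt 0" by (rule tendsto_real_sqrt)
    then have "(\<lambda>m. cmod (h k m)) \<longlonglongrightarrow> 0" by simp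
    then show ?thesis by (rule tendsto_mult_right_zero)
  qed
  have bound: "eventually (\<lambda>(k,m). norm ((1/2::real) ^ Suc k * cmod (h k m)) \<le> (1/2) ^ Suc k) (at_top \<times>\<^sub>F sequentially)"
  proof (rule always_eventually, clarify)
    fix k m
    show "norm ((1/2::real) ^ Suc k * cmod (h k m)) \<le> (1/2) ^ Suc k"
      using ball1_coord[OF hb[of k], of m] by (simp add: mult_left_le)
  qed
  have sM: "summable (\<lambda>k. (1/2::real) ^ Suc k)"
    using summable_geometric[of "1/2::real"] by (simp add: summable_mult)
  have "(\<lambda>m. \<Sum>k. (1/2::real) ^ Suc k * cmod (h k m)) \<longlonglongrightarrow> (\<Sum>k. (0::real))"
    using tannerys_theorem[where b="\<lambda>k. 0", OF lim bound sM] by simp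
  then show ?thesis unfolding Wf_def by simp
qed

lemma W0_pos:
  assumes hb: "\<And>i. h i \<in> ball1"
    and dens: "\<And>x e. x \<in> ball1 \<Longrightarrow> e > 0 \<Longrightarrow> \<exists>i. l2norm (\<lambda>n. x n - h i n) < e"
  shows "0 < Wf h 0"
proof -
  obtain i where i: "l2norm (\<lambda>n. sgl 0 1 n - h i n) < 1"
    using dens[OF sgl_ball1, of 1] by auto
  have "cmod (sgl 0 1 0 - h i 0) \<le> l2norm (\<lambda>n. sgl 0 1 n - h i n)"
    using l2_coord[OF l2_diff[OF sgl_l2 ball1_l2[OF hb[of i]]]] .
  with i have "h i 0 \<noteq> 0" by (auto simp: sgl_def)
  then show ?thesis unfolding Wf_def
    by (intro suminf_pos2[where i=i] W_summable hb) auto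
qed

lemma wdist_sgl: "(\<And>i. h i \<in> ball1) \<Longrightarrow> wdist h (sgl p 1) (\<lambda>k. 0) = Wf h p"
  unfolding wdist_def Wf_def by (simp add: inner_sgl)

lemma shift_l_sgl: "(shift_l ^^ m) (sgl m 1) = sgl 0 1"
  by (simp add: shift_l_pow sgl_def fun_eq_iff)

lemma part3:
  assumes hb: "\<And>i. h i \<in> ball1"
    and dens: "\<And>x e. x \<in> ball1 \<Longrightarrow> e > 0 \<Longrightarrow> \<exists>i. l2norm (\<lambda>n. x n - h i n) < e"
  shows "\<not> uec ball1 (wdist h) (\<lambda>n. shift_l ^^ n)"
proof
  assume "uec ball1 (wdist h) (\<lambda>n. shift_l ^^ n)"
  then have "\<exists>\<delta>>0. \<forall>n. \<forall>x\<in>ball1. \<forall>y\<in>ball1. wdist h x y < \<delta> \<longrightarrow>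
      wdist h ((shift_l ^^ n) x) ((shift_l ^^ n) y) < Wf h 0"
    unfolding uec_def using W0_pos[of h, OF hb dens] by blast
  then obtain \<delta> where d: "\<delta> > 0" and H0: "\<forall>n. \<forall>x\<in>ball1. \<forall>y\<in>ball1. wdist h x y < \<delta> \<longrightarrow>
      wdist h ((shift_l ^^ n) x) ((shift_l ^^ n) y) < Wf h 0" by blast
  have H: "\<And>n x y. x \<in> ball1 \<Longrightarrow> y \<in> ball1 \<Longrightarrow> wdist h x y < \<delta>
      \<Longrightarrow> wdist h ((shift_l ^^ n) x) ((shift_l ^^ n) y) < Wf h 0" using H0 by blast
  obtain no where no: "\<forall>n\<ge>no. norm (Wf h n - 0) < \<delta>"
    using LIMSEQ_D[OF W_tendsto[of h, OF hb] d] by blast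
  define m where "m = no"
  have m: "Wf h m < \<delta>" using no[rule_format, of m] unfolding m_def by simp
  have z: "(\<lambda>k. 0::complex) \<in> ball1" by (simp add: ball1_def l2_def l2norm_def)
  have "wdist h ((shift_l ^^ m) (sgl m 1)) ((shift_l ^^ m) (\<lambda>k. 0)) < Wf h 0"
    using H[OF sgl_ball1 z] m wdist_sgl[of h, OF hb] by simp
  moreover have "(shift_l ^^ m) (\<lambda>k. 0::complex) = (\<lambda>k. 0)" by (simp add: shift_l_pow)
  ultimately show False using shift_l_sgl wdist_sgl[of h, OF hb] by simp
qed


lemma shift_r_l2_iff: "shift_r x \<in> l2 \<longleftrightarrow> x \<in> l2"
proof -
  have "(\<lambda>n. (cmod (shift_r x (Suc n)))\<^sup>2) = (\<lambda>n. (cmod (x n))\<^sup>2)"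
    by (simp add: shift_r_def)
  then show ?thesis unfolding l2_def
    using summable_Suc_iff[of "\<lambda>n. (cmod (shift_r x n))\<^sup>2"] by simp
qed

lemma shift_r_pow_l2_iff: "(shift_r ^^ m) x \<in> l2 \<longleftrightarrow> x \<in> l2"
  by (induction m) (simp_all add: shift_r_l2_iff)

lemma l2_add: "x \<in> l2 \<Longrightarrow> y \<in> l2 \<Longrightarrow> (\<lambda>n. x n + y n) \<in> l2"
proof -
  assume x: "x \<in> l2" and y: "y \<in> l2"
  have "(\<lambda>n. - y n) \<in> l2" using y by (simp add: l2_def)
  from l2_diff[OF x this] show ?thesis by simp
qed

lemma l2_scale: "x \<in> l2 \<Longrightarrow> (\<lambda>n. c * x n) \<in> l2"
proof -
  assume x: "x \<in> l2"
  have "summable (\<lambda>n. (cmod c)\<^sup>2 * (cmod (x n))\<^sup>2)" using l2_summ[OF x] by (rule summable_mult)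
  then show ?thesis by (simp add: l2_def norm_mult power_mult_distrib)
qed

definition Aop :: "nat \<Rightarrow> (nat \<Rightarrow> complex) \<Rightarrow> nat \<Rightarrow> complex" where
  "Aop m = (\<lambda>x. if x \<in> l2 then sgl 0 (x m) else (\<lambda>k. 0))"

definition Zop :: "(nat \<Rightarrow> complex) \<Rightarrow> nat \<Rightarrow> complex" where
  "Zop = (\<lambda>x k. 0)"

lemma zero_l2: "(\<lambda>k. 0::complex) \<in> l2" by (simp add: l2_def)

lemma sgl_add: "sgl p (a + b) = (\<lambda>n. sgl p a n + sgl p b n)"
  by (auto simp: sgl_def)

lemma sgl_mult: "sgl p (c * a) = (\<lambda>n. c * sgl p a n)"
  by (auto simp: sgl_def)

lemma Aop_in: "Aop m \<in> opball1"
  unfolding opball1_def Aop_def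
  by (auto simp: sgl_l2 l2_add l2_scale sgl_norm l2_coord sgl_add sgl_mult)

lemma Zop_in: "Zop \<in> opball1"
  unfolding opball1_def Zop_def
  using zero_l2 l2norm_nonneg by (auto simp: l2norm_def)

lemma wod:
  assumes hb: "\<And>i. h i \<in> ball1"
    and A: "\<And>i. A (h i) = sgl 0 (h i p)" and B: "\<And>i. B (h i) = (\<lambda>k. 0)"
  shows "wodist h A B = Wf h p * Wf h 0"
proof -
  have inner: "(\<Sum>j. (1/2::real) ^ (Suc i + Suc j) * cmod (l2inner (\<lambda>n. A (h i) n - B (h i) n) (h j)))
      = ((1/2) ^ Suc i * cmod (h i p)) * Wf h 0" for i
  proof -
    have "(\<lambda>j. (1/2::real) ^ (Suc i + Suc j) * cmod (l2inner (\<lambda>n. A (h i) n - B (h i) n) (h j)))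
        = (\<lambda>j. ((1/2) ^ Suc i * cmod (h i p)) * ((1/2) ^ Suc j * cmod (h j 0)))"
    proof -
      have pa: "\<And>x. (1/2::real) ^ Suc (Suc (i + x)) = (1/2) ^ Suc i * (1/2) ^ Suc x"
        by (metis add_Suc add_Suc_right power_add)
      show ?thesis by (simp add: A B inner_sgl norm_mult fun_eq_iff pa power_add)
    qed
    then show ?thesis unfolding Wf_def
      using suminf_mult[OF W_summable[of h 0, OF hb], of "(1/2) ^ Suc i * cmod (h i p)"] by simp
  qed
  show ?thesis unfolding wodist_def inner Wf_def
    using suminf_mult2[OF W_summable[of h p, OF hb], of "\<Sum>j. (1/2) ^ Suc j * cmod (h j 0)"] by simp
qed

lemma part4:
  assumes hb: "\<And>i. h i \<in> ball1"
    and dens: "\<And>x e. x \<in> ball1 \<Longrightarrow> e > 0 \<Longrightarrow> \<exists>i. l2norm (\<lambda>n. x n - h i n) < e"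
  shows "\<not> uec opball1 (wodist h) (\<lambda>n A. A \<circ> (shift_r ^^ n))"
proof
  define c where "c = Wf h 0"
  have c: "c > 0" unfolding c_def using W0_pos[of h, OF hb dens] .
  assume "uec opball1 (wodist h) (\<lambda>n A. A \<circ> (shift_r ^^ n))"
  then have "\<exists>\<delta>>0. \<forall>n. \<forall>x\<in>opball1. \<forall>y\<in>opball1. wodist h x y < \<delta> \<longrightarrow>
      wodist h (x \<circ> (shift_r ^^ n)) (y \<circ> (shift_r ^^ n)) < c * c"
    unfolding uec_def using c by simp
  then obtain \<delta> where d: "\<delta> > 0" and H: "\<forall>n. \<forall>x\<in>opball1. \<forall>y\<in>opball1. wodist h x y < \<delta> \<longrightarrow>
      wodist h (x \<circ> (shift_r ^^ n)) (y \<circ> (shift_r ^^ n)) < c * c" by blast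
  obtain no where no: "\<forall>n\<ge>no. norm (Wf h n - 0) < \<delta> / c"
    using LIMSEQ_D[OF W_tendsto[of h, OF hb], of "\<delta> / c"] d c by auto
  define m where "m = no"
  have "Wf h m < \<delta> / c" using no[rule_format, of m] unfolding m_def by simp
  then have m: "Wf h m * c < \<delta>" using c by (simp add: field_simps)
  have hl2: "\<And>i. h i \<in> l2" using hb ball1_l2 by blast
  have "wodist h (Aop m) Zop = Wf h m * c"
    unfolding c_def by (rule wod[OF hb]) (auto simp: Aop_def Zop_def hl2)
  with m have "wodist h (Aop m \<circ> (shift_r ^^ m)) (Zop \<circ> (shift_r ^^ m)) < c * c"
    using H Aop_in Zop_in by simp
  moreover have "wodist h (Aop m \<circ> (shift_r ^^ m)) (Zop \<circ> (shift_r ^^ m)) = Wf h 0 * c"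
    unfolding c_def
  proof (rule wod[OF hb])
    fix i
    have l: "(shift_r ^^ m) (h i) \<in> l2" by (simp add: shift_r_pow_l2_iff hl2)
    have v: "(shift_r ^^ m) (h i) m = h i 0" by (simp add: shift_r_pow)
    show "(Aop m \<circ> (shift_r ^^ m)) (h i) = sgl 0 (h i 0)"
      using l v by (simp add: Aop_def)
    show "(Zop \<circ> (shift_r ^^ m)) (h i) = (\<lambda>k. 0)" by (simp add: Zop_def)
  qed
  ultimately show False unfolding c_def by simp
qed

theorem mainTheorem9:
  fixes h :: "nat \<Rightarrow> nat \<Rightarrow> complex"
  assumes "dense_seq h"
  shows "uec ball1 (wdist h) (\<lambda>n. shift_r ^^ n)
    \<and> (\<forall>x\<in>l2. \<forall>y\<in>l2. l2inner (shift_r x) y = l2inner x (shift_l y))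
    \<and> \<not> uec ball1 (wdist h) (\<lambda>n. shift_l ^^ n)
    \<and> \<not> uec opball1 (wodist h) (\<lambda>n A. A \<circ> (shift_r ^^ n))"
proof -
  have hb: "\<And>i. h i \<in> ball1" using assms by (simp add: dense_seq_def)
  have dens: "\<And>x e. x \<in> ball1 \<Longrightarrow> e > 0 \<Longrightarrow> \<exists>i. l2norm (\<lambda>n. x n - h i n) < e"
    using assms by (simp add: dense_seq_def)
  show ?thesis
    using part1[of h, OF hb dens] part3[of h, OF hb dens] part4[of h, OF hb dens] adj by blast
qed

end
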